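(* Let $\alpha\ge 2$, let $\gamma_t,\gamma_r>0$, and let $a,b>0$. Let $\beta_t,\beta_r,D_t,D_r>0$, and suppose there exist real numbers $\nu>0$, $\mu_1,\mu_2\ge 0$ and $\lambda$ satisfying the stationarity conditions $$(2^{\gamma_t}-1)\,\mu_1\,\frac{a\,D_t^{\alpha}}{\beta_t^{2}}=\lambda,\qquad (2^{\gamma_r}-1)\,\mu_2\,\frac{b\,D_r^{\alpha}}{\beta_r^{2}}=\lambda,\qquad \mu_1=\nu,\qquad \mu_2=(2^{\gamma_t}-1)\mu_1+\nu .$$ Define $|h_t|^2=\dfrac{\beta_t}{a\,D_t^{\alpha}}$ and $|h_r|^2=\dfrac{\beta_r}{b\,D_r^{\alpha}}$. Then $$|h_t|^2\le |h_r|^2 \iff \beta_r\le \frac{2^{\gamma_t}\,(2^{\gamma_r}-1)}{2^{\gamma_t}-1}\,\beta_t .$$ Symmetrically (roles of $t$ and $r$ exchanged): if instead $(2^{\gamma_r}-1)\mu_1 bD_r^{\alpha}/\beta_r^2=\lambda$, $(2^{\gamma_t}-1)\mu_2 aD_t^{\alpha}/\beta_t^2=\lambda$, $\mu_1=\nu>0$, $\mu_2=(2^{\gamma_r}-1)\mu_1+\nu$, then $|h_t|^2\ge |h_r|^2\iff \beta_t\le \dfrac{2^{\gamma_r}(2^{\gamma_t}-1)}{2^{\gamma_r}-1}\beta_r$.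
   Context: Setting: an access point (AP) serves a transmitted user $t$ and a reflected user $r$ via a simultaneously transmitting and reflecting reconfigurable intelligent surface (STAR-RIS) using NOMA. For user $k\in\{t,r\}$, $\beta_k\in(0,1]$ is the energy-splitting (amplitude-squared) coefficient with $\beta_t+\beta_r=1$, $D_k$ is the distance from the STAR-RIS to user $k$, $\alpha=\alpha_{RU}$ the path-loss exponent, $\gamma_k$ the rate requirement, $p_k$ the transmit power, and $a=\sigma^2/(\rho_0 c_t)$, $b=\sigma^2/(\rho_0 c_r)$ with $\sigma^2,\rho_0,c_t,c_r>0$ constants, so that the effective channel power gains are $\rho_0\beta_kc_k/D_k^\alpha$ (proportional to the quantities $|h_k|^2$ above). The stated stationarity conditions are those of the Lagrangian $\nu(p_t+p_r-P_{\max})+\lambda(\beta_t+\beta_r-1)+\mu_1[(2^{\gamma_t}-1)(aD_t^\alpha/\beta_t+p_r)-p_t]+\mu_2[(2^{\gamma_r}-1)bD_r^\alpha/\beta_r-p_r]$ with respect to $\beta_t,\beta_r,p_t,p_r$, arising from the NOMA QoS constraints when user $r$ performs successive interference cancellation (decoding order $\lambda(r)=1$); the symmetric case corresponds to decoding order $\lambda(t)=1$. The lemma says that, at such stationary points, the SIC decoding-order constraint is equivalent to a linear constraint in $(\beta_t,\beta_r)$. *)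

theory Defs
  imports Complex_Main
begin

definition ht2 :: "real \<Rightarrow> real \<Rightarrow> real \<Rightarrow> real \<Rightarrow> real" where
  "ht2 a \<alpha> \<beta>t Dt = \<beta>t / (a * Dt powr \<alpha>)"

definition hr2 :: "real \<Rightarrow> real \<Rightarrow> real \<Rightarrow> real \<Rightarrow> real" where
  "hr2 b \<alpha> \<beta>r Dr = \<beta>r / (b * Dr powr \<alpha>)"

end

theory Submission
  imports Defs
begin

lemma key:
  fixes A B G H x y n :: real
  assumes "A>0" "B>0" "G>0" "H>0" "x>0" "y>0" "n>0"
    and e: "G*n*(A/x^2) = H*(G*n+n)*(B/y^2)"
  shows "(x/A \<le> y/B) \<longleftrightarrow> y \<le> (G+1)*H/G*x"
proof -
  have e2: "G*A*y^2 = H*(G+1)*B*x^2"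
  proof -
    have "G*n*(A/x^2) * (x^2*y^2) = H*(G*n+n)*(B/y^2) * (x^2*y^2)" using e by simp
    hence "n*(G*A*y^2) = n*(H*(G+1)*B*x^2)" using assms by (simp add: field_simps power2_eq_square)
    thus ?thesis using assms by simp
  qed
  have "(x/A \<le> y/B) \<longleftrightarrow> x*B \<le> y*A" using assms by (simp add: divide_simps mult.commute)
  also have "\<dots> \<longleftrightarrow> G*y*(x*B) \<le> G*y*(y*A)" using assms by simp
  also have "G*y*(y*A) = H*(G+1)*B*x^2" using e2 by (simp add: power2_eq_square algebra_simps)
  also have "G*y*(x*B) \<le> H*(G+1)*B*x^2 \<longleftrightarrow> (x*B)*(G*y) \<le> (x*B)*(H*(G+1)*x)"
    by (simp add: power2_eq_square algebra_simps)
  also have "\<dots> \<longleftrightarrow> G*y \<le> H*(G+1)*x" using assms mult_le_cancel_left_pos[of "x*B" "G*y" "H*(G+1)*x"] by simp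
  also have "\<dots> \<longleftrightarrow> y \<le> (H*(G+1)*x)/G" using assms by (simp add: pos_le_divide_eq mult.commute)
  also have "(H*(G+1)*x)/G = (G+1)*H/G*x" by simp
  finally show ?thesis .
qed

theorem lemma1:
  fixes \<alpha> \<gamma>t \<gamma>r a b \<beta>t \<beta>r Dt Dr :: real
  assumes "\<alpha> \<ge> 2" and "\<gamma>t > 0" and "\<gamma>r > 0" and "a > 0" and "b > 0"
    and "\<beta>t > 0" and "\<beta>r > 0" and "Dt > 0" and "Dr > 0"
  shows "(\<forall>\<nu> \<mu>1 \<mu>2 lam::real. \<nu> > 0 \<and> \<mu>1 \<ge> 0 \<and> \<mu>2 \<ge> 0
            \<and> (2 powr \<gamma>t - 1) * \<mu>1 * (a * Dt powr \<alpha> / \<beta>t^2) = lam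
            \<and> (2 powr \<gamma>r - 1) * \<mu>2 * (b * Dr powr \<alpha> / \<beta>r^2) = lam
            \<and> \<mu>1 = \<nu> \<and> \<mu>2 = (2 powr \<gamma>t - 1) * \<mu>1 + \<nu>
          \<longrightarrow> (ht2 a \<alpha> \<beta>t Dt \<le> hr2 b \<alpha> \<beta>r Dr \<longleftrightarrow>
               \<beta>r \<le> 2 powr \<gamma>t * (2 powr \<gamma>r - 1) / (2 powr \<gamma>t - 1) * \<beta>t))
       \<and> (\<forall>\<nu> \<mu>1 \<mu>2 lam::real. \<nu> > 0 \<and> \<mu>1 \<ge> 0 \<and> \<mu>2 \<ge> 0
            \<and> (2 powr \<gamma>r - 1) * \<mu>1 * (b * Dr powr \<alpha> / \<beta>r^2) = lam
            \<and> (2 powr \<gamma>t - 1) * \<mu>2 * (a * Dt powr \<alpha> / \<beta>t^2) = lam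
            \<and> \<mu>1 = \<nu> \<and> \<mu>2 = (2 powr \<gamma>r - 1) * \<mu>1 + \<nu>
          \<longrightarrow> (ht2 a \<alpha> \<beta>t Dt \<ge> hr2 b \<alpha> \<beta>r Dr \<longleftrightarrow>
               \<beta>t \<le> 2 powr \<gamma>r * (2 powr \<gamma>t - 1) / (2 powr \<gamma>r - 1) * \<beta>r))"
  proof -
  have p: "2 powr \<gamma>t - 1 > 0" "2 powr \<gamma>r - 1 > 0" using assms by auto
  have A: "a * Dt powr \<alpha> > 0" "b * Dr powr \<alpha> > 0" using assms by auto
  show ?thesis
  proof (intro conjI allI impI)
    fix \<nu> \<mu>1 \<mu>2 lam :: real
    assume h: "\<nu> > 0 \<and> \<mu>1 \<ge> 0 \<and> \<mu>2 \<ge> 0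
            \<and> (2 powr \<gamma>t - 1) * \<mu>1 * (a * Dt powr \<alpha> / \<beta>t^2) = lam
            \<and> (2 powr \<gamma>r - 1) * \<mu>2 * (b * Dr powr \<alpha> / \<beta>r^2) = lam
            \<and> \<mu>1 = \<nu> \<and> \<mu>2 = (2 powr \<gamma>t - 1) * \<mu>1 + \<nu>"
    have "(\<beta>t/(a * Dt powr \<alpha>) \<le> \<beta>r/(b * Dr powr \<alpha>)) \<longleftrightarrow> \<beta>r \<le> ((2 powr \<gamma>t - 1)+1)*(2 powr \<gamma>r - 1)/(2 powr \<gamma>t - 1)*\<beta>t"
      proof (rule key[where n=\<nu>])
      have "(2 powr \<gamma>t - 1) * \<nu> * (a * Dt powr \<alpha> / \<beta>t^2) = lam" using h by blast
      moreover have "(2 powr \<gamma>r - 1) * ((2 powr \<gamma>t - 1) * \<nu> + \<nu>) * (b * Dr powr \<alpha> / \<beta>r^2) = lam" using h by blast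
      ultimately show "(2 powr \<gamma>t - 1) * \<nu> * (a * Dt powr \<alpha> / \<beta>t^2) = (2 powr \<gamma>r - 1) * ((2 powr \<gamma>t - 1) * \<nu> + \<nu>) * (b * Dr powr \<alpha> / \<beta>r^2)" by simp
    qed (use h p A assms in auto)
    then show "(ht2 a \<alpha> \<beta>t Dt \<le> hr2 b \<alpha> \<beta>r Dr \<longleftrightarrow>
               \<beta>r \<le> 2 powr \<gamma>t * (2 powr \<gamma>r - 1) / (2 powr \<gamma>t - 1) * \<beta>t)"
      by (simp add: ht2_def hr2_def)
  next
    fix \<nu> \<mu>1 \<mu>2 lam :: real
    assume h: "\<nu> > 0 \<and> \<mu>1 \<ge> 0 \<and> \<mu>2 \<ge> 0
            \<and> (2 powr \<gamma>r - 1) * \<mu>1 * (b * Dr powr \<alpha> / \<beta>r^2) = lam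
            \<and> (2 powr \<gamma>t - 1) * \<mu>2 * (a * Dt powr \<alpha> / \<beta>t^2) = lam
            \<and> \<mu>1 = \<nu> \<and> \<mu>2 = (2 powr \<gamma>r - 1) * \<mu>1 + \<nu>"
    have "(\<beta>r/(b * Dr powr \<alpha>) \<le> \<beta>t/(a * Dt powr \<alpha>)) \<longleftrightarrow> \<beta>t \<le> ((2 powr \<gamma>r - 1)+1)*(2 powr \<gamma>t - 1)/(2 powr \<gamma>r - 1)*\<beta>r"
      proof (rule key[where n=\<nu>])
      have "(2 powr \<gamma>r - 1) * \<nu> * (b * Dr powr \<alpha> / \<beta>r^2) = lam" using h by blast
      moreover have "(2 powr \<gamma>t - 1) * ((2 powr \<gamma>r - 1) * \<nu> + \<nu>) * (a * Dt powr \<alpha> / \<beta>t^2) = lam" using h by blast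
      ultimately show "(2 powr \<gamma>r - 1) * \<nu> * (b * Dr powr \<alpha> / \<beta>r^2) = (2 powr \<gamma>t - 1) * ((2 powr \<gamma>r - 1) * \<nu> + \<nu>) * (a * Dt powr \<alpha> / \<beta>t^2)" by simp
    qed (use h p A assms in auto)
    then show "(ht2 a \<alpha> \<beta>t Dt \<ge> hr2 b \<alpha> \<beta>r Dr \<longleftrightarrow>
               \<beta>t \<le> 2 powr \<gamma>r * (2 powr \<gamma>t - 1) / (2 powr \<gamma>r - 1) * \<beta>r)"
      by (simp add: ht2_def hr2_def)
  qed
qed

end
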